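(* Let $(x_j, x_k)$ be a pair of jointly normal random variables with zero means, unit variances and correlation coefficient $\rho_{jk}$. Let $(x_j^{(1)},x_k^{(1)}),\dots,(x_j^{(n)},x_k^{(n)})$ be $n$ i.i.d. copies of $(x_j,x_k)$, and set $\hat x_j^{(i)} = \mathrm{sign}(x_j^{(i)})$, $\hat x_k^{(i)} = \mathrm{sign}(x_k^{(i)})$. Define $$\hat\beta_{jk} = \frac{1}{n}\sum_{i=1}^n \mathbb{I}\big(\hat x_j^{(i)}\hat x_k^{(i)} = 1\big), \qquad \hat\rho_{jk} = -\cos(\pi \hat\beta_{jk}).$$ Then for every $\delta \ge 0$, $$\Pr\big(|\hat\rho_{jk} - \rho_{jk}| \ge \delta\big) \le 2\exp\Big(-\frac{2}{\pi^2} n \delta^2\Big).$$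
   Context: $\mathbb{I}(\cdot)$ denotes the indicator function and $\mathrm{sign}(t)\in\{-1,+1\}$ is the sign of $t$ (the event $t=0$ has probability zero). *)

theory Defs
  imports "HOL-Probability.Probability"
begin

text \<open>The standard bivariate normal law with zero means, unit variances and
correlation coefficient rho (for -1 <= rho <= 1): the distribution of
(Z1, rho*Z1 + sqrt(1-rho^2)*Z2) with Z1, Z2 independent standard normals.
This covers the degenerate cases rho = +-1 as well.\<close>

definition std_bivariate_normal :: "real \<Rightarrow> (real \<times> real) measure" where
  "std_bivariate_normal \<rho> =
     distr (density lborel std_normal_density \<Otimes>\<^sub>M density lborel std_normal_density)
           (borel \<Otimes>\<^sub>M borel)
           (\<lambda>(z1, z2). (z1, \<rho> * z1 + sqrt (1 - \<rho>\<^sup>2) * z2))"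

definition beta_hat :: "nat \<Rightarrow> (nat \<Rightarrow> 'a \<Rightarrow> real) \<Rightarrow> (nat \<Rightarrow> 'a \<Rightarrow> real) \<Rightarrow> 'a \<Rightarrow> real" where
  "beta_hat n X Y \<omega> =
     (1 / real n) * (\<Sum>i<n. if sgn (X i \<omega>) * sgn (Y i \<omega>) = 1 then 1 else 0)"

definition rho_hat :: "nat \<Rightarrow> (nat \<Rightarrow> 'a \<Rightarrow> real) \<Rightarrow> (nat \<Rightarrow> 'a \<Rightarrow> real) \<Rightarrow> 'a \<Rightarrow> real" where
  "rho_hat n X Y \<omega> = - cos (pi * beta_hat n X Y \<omega>)"

end

theory Submission
  imports Defs "HOL-Real_Asymp.Real_Asymp"
begin

lemma half_gauss_k:
  fixes k :: real assumes k: "k > 0"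
  shows "(\<integral>\<^sup>+x. ennreal (x * exp (- (k * x\<^sup>2))) * indicator {0..} x \<partial>lborel)
         = ennreal (1 / (2 * k))"
proof -
  have "(\<integral>\<^sup>+x. ennreal (x * exp (- (k * x\<^sup>2))) * indicator {0..} x \<partial>lborel)
       = ennreal (0 - (- exp (- (k * 0\<^sup>2)) / (2 * k)))"
  proof (rule nn_integral_FTC_atLeast)
    show "((\<lambda>a::real. - exp (- (k * a\<^sup>2)) / (2 * k)) \<longlongrightarrow> 0) at_top"
      using k by real_asymp
  qed (use k in \<open>auto intro!: derivative_eq_intros simp: field_simps\<close>)
  then show ?thesis by simp
qed

lemma phi_prod: "std_normal_density x * std_normal_density (x * t)
   = exp (- (((1 + t\<^sup>2) / 2) * x\<^sup>2)) / (2 * pi)"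
  by (simp add: std_normal_density_def mult_exp_exp field_simps power2_eq_square real_sqrt_mult
        flip: real_sqrt_mult)

lemma abs_gauss:
  fixes t :: real
  shows "(\<integral>\<^sup>+x. ennreal (\<bar>x\<bar> * std_normal_density x * std_normal_density (x * t)) \<partial>lborel)
         = ennreal (1 / (pi * (1 + t\<^sup>2)))"
proof -
  define k where "k = (1 + t\<^sup>2) / 2"
  have k: "k > 0" unfolding k_def by (simp add: add_pos_nonneg)
  define g where "g x = ennreal (x * exp (- (k * x\<^sup>2))) * indicator {0..} x" for x
  have g[measurable]: "g \<in> borel_measurable borel" unfolding g_def by measurable
  have pt: "ennreal (\<bar>x\<bar> * std_normal_density x * std_normal_density (x * t))
      = ennreal (1 / (2 * pi)) * (g x + g (0 + (-1) * x))" for x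
  proof -
    have e: "\<bar>x\<bar> * std_normal_density x * std_normal_density (x * t)
        = \<bar>x\<bar> * exp (- (k * x\<^sup>2)) / (2 * pi)"
      using phi_prod[of x t] unfolding k_def by (simp add: mult.assoc)
    show ?thesis unfolding e g_def
      by (cases "x \<ge> 0") (auto simp: indicator_def ennreal_mult'[symmetric] ennreal_mult[symmetric])
  qed
  have "(\<integral>\<^sup>+x. ennreal (\<bar>x\<bar> * std_normal_density x * std_normal_density (x * t)) \<partial>lborel)
      = ennreal (1 / (2 * pi)) * ((\<integral>\<^sup>+x. g x \<partial>lborel) + (\<integral>\<^sup>+x. g (0 + (-1) * x) \<partial>lborel))"
    unfolding pt
    by (subst nn_integral_cmult, measurable) (subst nn_integral_add, auto)
  also have "(\<integral>\<^sup>+x. g (0 + (-1) * x) \<partial>lborel) = (\<integral>\<^sup>+x. g x \<partial>lborel)"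
    using nn_integral_real_affine[OF g, of "-1" 0] by simp
  also have "(\<integral>\<^sup>+x. g x \<partial>lborel) = ennreal (1 / (2 * k))"
    unfolding g_def by (rule half_gauss_k[OF k])
  also have "ennreal (1 / (2 * pi)) * (ennreal (1 / (2 * k)) + ennreal (1 / (2 * k)))
      = ennreal (1 / (2 * pi) * (1 / (2 * k) + 1 / (2 * k)))"
    using k by (simp add: ennreal_mult[symmetric] flip: ennreal_plus)
  also have "1 / (2 * pi) * (1 / (2 * k) + 1 / (2 * k)) = 1 / (pi * (1 + t\<^sup>2))"
  proof -
    have "pi * (1 + t\<^sup>2) > 0" by (simp add: add_pos_nonneg)
    then show ?thesis unfolding k_def by (simp add: field_simps)
  qed
  finally show ?thesis .
qed

lemma arctan_tail:
  fixes a :: real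
  shows "(\<integral>\<^sup>+t. ennreal (1 / (pi * (1 + t\<^sup>2))) * indicator {a<..} t \<partial>lborel)
         = ennreal (1 / 2 - arctan a / pi)"
proof -
  have "(\<integral>\<^sup>+t. ennreal (1 / (pi * (1 + t\<^sup>2))) * indicator {a<..} t \<partial>lborel)
      = (\<integral>\<^sup>+t. ennreal (1 / (pi * (1 + t\<^sup>2))) * indicator {a..} t \<partial>lborel)"
    by (intro nn_integral_cong_AE AE_I[where N="{a}"]) (auto split: split_indicator)
  also have "\<dots> = ennreal ((pi / 2) / pi - arctan a / pi)"
  proof (rule nn_integral_FTC_atLeast)
    show "((\<lambda>t. arctan t / pi) \<longlongrightarrow> (pi / 2) / pi) at_top"
      by (intro tendsto_intros) (simp_all add: tendsto_arctan_at_top)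
  next
    fix t :: real
    have p: "1 + t\<^sup>2 > 0" by (simp add: add_pos_nonneg)
    show "DERIV (\<lambda>t. arctan t / pi) t :> 1 / (pi * (1 + t\<^sup>2))"
      using DERIV_cdivide[OF DERIV_arctan[of t], of pi] p by (simp add: inverse_eq_divide mult.commute)
    show "0 \<le> 1 / (pi * (1 + t\<^sup>2))" using p by simp
  qed auto
  finally show ?thesis by simp
qed

lemma agree_int:
  fixes \<rho> :: real
  assumes r1: "-1 < \<rho>" and r2: "\<rho> < 1"
  shows "(\<integral>\<^sup>+x. ennreal (std_normal_density x) *
            (\<integral>\<^sup>+y. ennreal (std_normal_density y) *
               ennreal (if sgn x * sgn (\<rho> * x + sqrt (1 - \<rho>\<^sup>2) * y) = 1 then 1 else 0) \<partial>lborel) \<partial>lborel)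
         = ennreal (1 / 2 + arcsin \<rho> / pi)"
proof -
  define s where "s = sqrt (1 - \<rho>\<^sup>2)"
  have "\<rho>\<^sup>2 < 1" using r1 r2 by (simp add: abs_square_less_1)
  then have s: "s > 0" unfolding s_def by simp
  define c where "c = \<rho> / s"
  define H where "H x y = ennreal (if sgn x * sgn (\<rho> * x + s * y) = 1 then 1 else 0)" for x y
  have H_meas[measurable]: "(\<lambda>(x, y). H x y) \<in> borel_measurable (borel \<Otimes>\<^sub>M borel)"
    unfolding H_def by measurable
  have Hxt: "H x (x * t) = indicator {-c<..} t" if "x \<noteq> 0" for x t
  proof -
    have "\<rho> * x + s * (x * t) = x * (\<rho> + s * t)" by (simp add: algebra_simps)
    then have "sgn x * sgn (\<rho> * x + s * (x * t)) = sgn (\<rho> + s * t)"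
      using that by (simp add: sgn_mult mult.assoc[symmetric] sgn_mult_self_eq)
    moreover have "(sgn (\<rho> + s * t) = 1) = (-c < t)"
      using s unfolding c_def by (auto simp: sgn_if field_simps)
    ultimately show ?thesis unfolding H_def by (simp add: indicator_def)
  qed
  have step1: "ennreal (std_normal_density x) * (\<integral>\<^sup>+y. ennreal (std_normal_density y) * H x y \<partial>lborel)
     = (\<integral>\<^sup>+t. ennreal (\<bar>x\<bar> * std_normal_density x * std_normal_density (x * t)) * indicator {-c<..} t \<partial>lborel)"
    for x
  proof (cases "x = 0")
    case True
    then show ?thesis unfolding H_def by simp
  next
    case False
    have "(\<integral>\<^sup>+y. ennreal (std_normal_density y) * H x y \<partial>lborel)
        = \<bar>x\<bar> * (\<integral>\<^sup>+t. ennreal (std_normal_density (0 + x * t)) * H x (0 + x * t) \<partial>lborel)"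
      by (rule nn_integral_real_affine) (use False in auto)
    also have "\<dots> = \<bar>x\<bar> * (\<integral>\<^sup>+t. ennreal (std_normal_density (x * t)) * indicator {-c<..} t \<partial>lborel)"
      using False by (simp add: Hxt)
    finally show ?thesis
      by (simp add: nn_integral_cmult[symmetric] ennreal_mult normal_density_nonneg mult_ac
            nn_integral_set_ennreal)
  qed
  have "(\<integral>\<^sup>+x. ennreal (std_normal_density x) * (\<integral>\<^sup>+y. ennreal (std_normal_density y) * H x y \<partial>lborel) \<partial>lborel)
     = (\<integral>\<^sup>+x. \<integral>\<^sup>+t. ennreal (\<bar>x\<bar> * std_normal_density x * std_normal_density (x * t)) * indicator {-c<..} t \<partial>lborel \<partial>lborel)"
    by (simp add: step1)
  also have "\<dots> = (\<integral>\<^sup>+t. \<integral>\<^sup>+x. ennreal (\<bar>x\<bar> * std_normal_density x * std_normal_density (x * t)) * indicator {-c<..} t \<partial>lborel \<partial>lborel)"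
    by (rule lborel_pair.Fubini'[symmetric]) measurable
  also have "\<dots> = (\<integral>\<^sup>+t. ennreal (1 / (pi * (1 + t\<^sup>2))) * indicator {-c<..} t \<partial>lborel)"
    by (subst nn_integral_multc) (simp_all add: abs_gauss)
  also have "\<dots> = ennreal (1 / 2 - arctan (-c) / pi)"
    by (rule arctan_tail)
  also have "arctan (-c) = - arcsin \<rho>"
    unfolding c_def s_def using arcsin_arctan[OF r1 r2] by (simp add: arctan_minus)
  finally show ?thesis unfolding H_def s_def by simp
qed

lemma phi_int: "(\<integral>\<^sup>+x. ennreal (std_normal_density x) \<partial>lborel) = 1"
proof -
  interpret N: prob_space "density lborel std_normal_density"
    by (rule prob_space_normal_density) simp
  have "emeasure (density lborel std_normal_density) UNIV = 1"
    using N.emeasure_space_1 by simp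
  then show ?thesis by (simp add: emeasure_density)
qed

lemma agree_all:
  fixes \<rho> :: real
  assumes r1: "-1 \<le> \<rho>" and r2: "\<rho> \<le> 1"
  shows "(\<integral>\<^sup>+x. ennreal (std_normal_density x) *
            (\<integral>\<^sup>+y. ennreal (std_normal_density y) *
               ennreal (if sgn x * sgn (\<rho> * x + sqrt (1 - \<rho>\<^sup>2) * y) = 1 then 1 else 0) \<partial>lborel) \<partial>lborel)
         = ennreal (1 / 2 + arcsin \<rho> / pi)"
proof (cases "\<rho> = 1")
  case True
  have "(\<integral>\<^sup>+x. ennreal (std_normal_density x) *
            (\<integral>\<^sup>+y. ennreal (std_normal_density y) *
               ennreal (if sgn x * sgn (\<rho> * x + sqrt (1 - \<rho>\<^sup>2) * y) = 1 then 1 else 0) \<partial>lborel) \<partial>lborel)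
      = (\<integral>\<^sup>+x. ennreal (std_normal_density x) \<partial>lborel)"
  proof (intro nn_integral_cong_AE eventually_mono[OF AE_lborel_singleton[of 0]])
    fix x :: real assume "x \<noteq> 0"
    then show "ennreal (std_normal_density x) *
            (\<integral>\<^sup>+y. ennreal (std_normal_density y) *
               ennreal (if sgn x * sgn (\<rho> * x + sqrt (1 - \<rho>\<^sup>2) * y) = 1 then 1 else 0) \<partial>lborel)
         = ennreal (std_normal_density x)"
      using True phi_int by (simp add: sgn_mult_self_eq)
  qed
  then show ?thesis using True phi_int by simp
next
  case False
  show ?thesis
  proof (cases "\<rho> = -1")
    case True
    have "sgn x * sgn (- x) \<noteq> 1" for x :: real
      by (cases "x = 0") (auto simp: sgn_if)
    then show ?thesis using True by simp
  next
    case False2: False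
    show ?thesis using False False2 r1 r2 by (intro agree_int) auto
  qed
qed

definition agreeF :: "real \<times> real \<Rightarrow> real" where
  "agreeF = (\<lambda>(u, v). if sgn u * sgn v = 1 then 1 else 0)"

lemma agreeF_meas[measurable]: "agreeF \<in> borel_measurable (borel \<Otimes>\<^sub>M borel)"
  unfolding agreeF_def by measurable

lemma agreeF_bounds: "0 \<le> agreeF z" "agreeF z \<le> 1"
  unfolding agreeF_def by (auto split: prod.splits)

lemma expect_agree:
  fixes M :: "'a measure" and X Y :: "'a \<Rightarrow> real"
  assumes "prob_space M" "-1 \<le> \<rho>" "\<rho> \<le> 1"
    and [measurable]: "X \<in> borel_measurable M" "Y \<in> borel_measurable M"
    and D: "distr M (borel \<Otimes>\<^sub>M borel) (\<lambda>\<omega>. (X \<omega>, Y \<omega>)) = std_bivariate_normal \<rho>"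
  shows "prob_space.expectation M (\<lambda>\<omega>. agreeF (X \<omega>, Y \<omega>)) = 1 / 2 + arcsin \<rho> / pi"
proof -
  interpret prob_space M by fact
  define N where "N = density lborel std_normal_density"
  interpret N: prob_space N unfolding N_def by (rule prob_space_normal_density) simp
  have sN[measurable_cong]: "sets N = sets borel" unfolding N_def by simp
  define T where "T = (\<lambda>(z1::real, z2::real). (z1, \<rho> * z1 + sqrt (1 - \<rho>\<^sup>2) * z2))"
  have T[measurable]: "T \<in> measurable (N \<Otimes>\<^sub>M N) (borel \<Otimes>\<^sub>M borel)"
    unfolding T_def by measurable
  have "expectation (\<lambda>\<omega>. agreeF (X \<omega>, Y \<omega>))
      = integral\<^sup>L (distr M (borel \<Otimes>\<^sub>M borel) (\<lambda>\<omega>. (X \<omega>, Y \<omega>))) agreeF"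
    by (rule integral_distr[symmetric]) measurable
  also have "\<dots> = integral\<^sup>L (N \<Otimes>\<^sub>M N) (\<lambda>z. agreeF (T z))"
    unfolding D std_bivariate_normal_def N_def[symmetric] T_def[symmetric]
    by (rule integral_distr) measurable
  also have "\<dots> = enn2real (\<integral>\<^sup>+z. ennreal (agreeF (T z)) \<partial>(N \<Otimes>\<^sub>M N))"
    by (rule integral_eq_nn_integral) (auto simp: agreeF_bounds)
  also have "(\<integral>\<^sup>+z. ennreal (agreeF (T z)) \<partial>(N \<Otimes>\<^sub>M N))
      = (\<integral>\<^sup>+x. \<integral>\<^sup>+y. ennreal (agreeF (T (x, y))) \<partial>N \<partial>N)"
    by (rule N.nn_integral_fst[symmetric]) measurable
  also have "\<dots> = (\<integral>\<^sup>+x. ennreal (std_normal_density x) *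
            (\<integral>\<^sup>+y. ennreal (std_normal_density y) *
               ennreal (if sgn x * sgn (\<rho> * x + sqrt (1 - \<rho>\<^sup>2) * y) = 1 then 1 else 0) \<partial>lborel) \<partial>lborel)"
    unfolding N_def
    by (subst nn_integral_density; (simp add: T_def agreeF_def)?; measurable?)+
  also have "\<dots> = ennreal (1 / 2 + arcsin \<rho> / pi)"
    by (rule agree_all) fact+
  finally show ?thesis
  proof -
    have "-(pi/2) \<le> arcsin \<rho>" using arcsin_lbound[of \<rho>] assms(2,3) by simp
    then have "0 \<le> 1 / 2 + arcsin \<rho> / pi" by (simp add: field_simps)
    then show "expectation (\<lambda>\<omega>. agreeF (X \<omega>, Y \<omega>)) = enn2real (ennreal (1 / 2 + arcsin \<rho> / pi))
      \<Longrightarrow> ?thesis" by simp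
  qed
qed

lemma cos_lip: "\<bar>cos (a::real) - cos b\<bar> \<le> \<bar>a - b\<bar>"
proof -
  have "\<bar>cos a - cos b\<bar> = 2 * \<bar>sin ((a + b) / 2)\<bar> * \<bar>sin ((b - a) / 2)\<bar>"
    by (simp add: cos_diff_cos abs_mult)
  also have "\<dots> \<le> 2 * 1 * \<bar>(b - a) / 2\<bar>"
    by (intro mult_mono abs_sin_x_le_abs_x) auto
  finally show ?thesis by simp
qed

theorem lemma1:
  fixes M :: "'a measure" and X Y :: "nat \<Rightarrow> 'a \<Rightarrow> real"
    and \<rho> \<delta> :: real and n :: nat
  assumes "prob_space M"
    and "-1 \<le> \<rho>" and "\<rho> \<le> 1"
    and "\<And>i. i < n \<Longrightarrow> X i \<in> borel_measurable M"
    and "\<And>i. i < n \<Longrightarrow> Y i \<in> borel_measurable M"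
    and "\<And>i. i < n \<Longrightarrow>
           distr M (borel \<Otimes>\<^sub>M borel) (\<lambda>\<omega>. (X i \<omega>, Y i \<omega>)) = std_bivariate_normal \<rho>"
    and "prob_space.indep_vars M (\<lambda>_. borel \<Otimes>\<^sub>M borel) (\<lambda>i \<omega>. (X i \<omega>, Y i \<omega>)) {..<n}"
    and "\<delta> \<ge> 0"
  shows "measure M {\<omega> \<in> space M. \<bar>rho_hat n X Y \<omega> - \<rho>\<bar> \<ge> \<delta>}
           \<le> 2 * exp (- (2 / pi\<^sup>2) * real n * \<delta>\<^sup>2)"
proof -
  interpret prob_space M by fact
  show ?thesis
  proof (cases "n = 0 \<or> \<delta> = 0")
    case True
    then have "2 * exp (- (2 / pi\<^sup>2) * real n * \<delta>\<^sup>2) = 2" by auto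
    moreover have "measure M {\<omega> \<in> space M. \<bar>rho_hat n X Y \<omega> - \<rho>\<bar> \<ge> \<delta>} \<le> 1" by simp
    ultimately show ?thesis by linarith
  next
    case False
    then have n: "n > 0" and d: "\<delta> > 0" using assms(8) by auto
    define Z where "Z i \<omega> = agreeF (X i \<omega>, Y i \<omega>)" for i \<omega>
    define \<beta> where "\<beta> = 1 / 2 + arcsin \<rho> / pi"
    have EZ: "expectation (Z i) = \<beta>" if "i < n" for i
      unfolding Z_def \<beta>_def
      by (rule expect_agree) (use assms that in auto)
    have indZ: "indep_vars (\<lambda>_. borel) Z {..<n}"
      unfolding Z_def
      by (rule indep_vars_compose2[OF assms(7), where Y="\<lambda>_. agreeF"]) simp
    interpret H: Hoeffding_ineq M "{..<n}" Z "\<lambda>_. 0" "\<lambda>_. 1" "(\<Sum>i\<in>{..<n}. expectation (Z i))"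
      by unfold_locales (auto simp: indZ Z_def agreeF_bounds)
    have mu: "(\<Sum>i\<in>{..<n}. expectation (Z i)) = real n * \<beta>" using EZ by simp
    define \<epsilon> where "\<epsilon> = real n * \<delta> / pi"
    have bd: "prob {x\<in>space M. \<bar>(\<Sum>i\<in>{..<n}. Z i x) - real n * \<beta>\<bar> \<ge> \<epsilon>}
        \<le> 2 * exp (-2 * \<epsilon>\<^sup>2 / (\<Sum>i\<in>{..<n}. (1 - 0)\<^sup>2))"
      using H.Hoeffding_ineq_abs_ge[of \<epsilon>] n d unfolding mu \<epsilon>_def by simp
    have "-2 * \<epsilon>\<^sup>2 / (\<Sum>i\<in>{..<n}. (1 - 0)\<^sup>2) = - (2 / pi\<^sup>2) * real n * \<delta>\<^sup>2"
      using n unfolding \<epsilon>_def by (simp add: field_simps power2_eq_square)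
    note bd = bd[unfolded this]
    have rho_eq: "- cos (pi * \<beta>) = \<rho>"
      unfolding \<beta>_def using assms(2,3)
      by (simp add: distrib_left cos_add)
    have sub: "{\<omega> \<in> space M. \<bar>rho_hat n X Y \<omega> - \<rho>\<bar> \<ge> \<delta>}
        \<subseteq> {x\<in>space M. \<bar>(\<Sum>i\<in>{..<n}. Z i x) - real n * \<beta>\<bar> \<ge> \<epsilon>}"
    proof safe
      fix \<omega> assume "\<omega> \<in> space M" and h: "\<delta> \<le> \<bar>rho_hat n X Y \<omega> - \<rho>\<bar>"
      define S where "S = (\<Sum>i\<in>{..<n}. Z i \<omega>)"
      have bh: "beta_hat n X Y \<omega> = S / real n"
        unfolding beta_hat_def S_def Z_def agreeF_def by simp
      have "\<bar>rho_hat n X Y \<omega> - \<rho>\<bar> = \<bar>cos (pi * \<beta>) - cos (pi * (S / real n))\<bar>"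
        unfolding rho_hat_def bh rho_eq[symmetric] by simp
      also have "\<dots> \<le> \<bar>pi * \<beta> - pi * (S / real n)\<bar>" by (rule cos_lip)
      also have "\<dots> = pi * \<bar>S - real n * \<beta>\<bar> / real n"
      proof -
        have "pi * \<beta> - pi * (S / real n) = - (pi * (S - real n * \<beta>) / real n)"
          using n by (simp add: field_simps)
        then show ?thesis by (simp add: abs_mult abs_divide)
      qed
      finally have "\<delta> \<le> pi * \<bar>S - real n * \<beta>\<bar> / real n" using h by linarith
      then have "\<delta> * real n \<le> pi * \<bar>S - real n * \<beta>\<bar>" using n by (simp add: pos_le_divide_eq)
      then show "\<epsilon> \<le> \<bar>(\<Sum>i\<in>{..<n}. Z i \<omega>) - real n * \<beta>\<bar>"
        unfolding \<epsilon>_def S_def[symmetric] by (simp add: field_simps mult.commute)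
    qed
    have "measure M {\<omega> \<in> space M. \<bar>rho_hat n X Y \<omega> - \<rho>\<bar> \<ge> \<delta>}
        \<le> prob {x\<in>space M. \<bar>(\<Sum>i\<in>{..<n}. Z i x) - real n * \<beta>\<bar> \<ge> \<epsilon>}"
      by (rule finite_measure_mono[OF sub]) measurable
    with bd show ?thesis by linarith
  qed
qed

end
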